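(* Let $X \subseteq \mathbb{P}^N$ be an irreducible, nondegenerate variety over an algebraically closed field $\Bbbk$ of characteristic zero. Let $g$ be the generic rank and $m$ the maximal rank with respect to $X$. Then for each $k$ with $g+1 \leq k \leq m$ we have $W_k + X \subseteq W_{k-1}$. In particular $W_m \subset W_{m-1} \subset \dotsb \subset W_{g+1} \subset W_g = \mathbb{P}^N$.
   Context: For a nondegenerate variety $X\subseteq\mathbb{P}^N$, the rank $\operatorname{rank}_X(p)$ of a point $p\in\mathbb{P}^N$ is the least integer $r$ such that $p$ lies in the linear span of some $r$ distinct points of $X$. For $k\ge 1$, $W_k=\overline{\{p\in\mathbb{P}^N:\operatorname{rank}_X(p)=k\}}$ (Zariski closure). The generic rank $g$ is the rank attained on a Zariski dense open subset of $\mathbb{P}^N$; the maximal rank $m$ is the maximum value of $\operatorname{rank}_X$. For varieties $V_1,V_2\subseteq \mathbb{P}^N$, the join $V_1+V_2$ is the Zariski closure of the union of all lines spanned by pairs of distinct points $p\in V_1$, $q\in V_2$. *)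

theory Defs
  imports "HOL-Analysis.Finite_Cartesian_Product" "HOL-Computational_Algebra.Polynomial"
begin

text \<open>Projective space P^N over a field 'k is modelled via homogeneous coordinates:
  vectors in 'k^'n with CARD('n) = N+1; a point of P^N is represented by any nonzero
  vector, and subsets of P^N are represented by cones of nonzero vectors.\<close>

definition alg_closed :: "'k::field itself \<Rightarrow> bool" where
  "alg_closed _ \<longleftrightarrow> (\<forall>p :: 'k poly. degree p > 0 \<longrightarrow> (\<exists>x. poly p x = 0))"

definition proj_pts :: "('k::field ^ 'n::finite) set" where
  "proj_pts = {v. v \<noteq> 0}"

definition hom_poly :: "('k::field ^ 'n::finite \<Rightarrow> 'k) \<Rightarrow> bool" where
  "hom_poly f \<longleftrightarrow> (\<exists>d C c. finite C \<and> (\<forall>e\<in>C. (\<Sum>i\<in>UNIV. e i) = (d::nat)) \<and>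
      (\<forall>x. f x = (\<Sum>e\<in>C. c e * (\<Prod>i\<in>UNIV. (x $ i) ^ e i))))"

definition zariski_closed :: "('k::field ^ 'n::finite) set \<Rightarrow> bool" where
  "zariski_closed Z \<longleftrightarrow> (\<exists>F. (\<forall>f\<in>F. hom_poly f) \<and> Z = {x. x \<noteq> 0 \<and> (\<forall>f\<in>F. f x = 0)})"

definition zariski_open :: "('k::field ^ 'n::finite) set \<Rightarrow> bool" where
  "zariski_open U \<longleftrightarrow> U \<subseteq> proj_pts \<and> zariski_closed (proj_pts - U)"

definition zcl :: "('k::field ^ 'n::finite) set \<Rightarrow> ('k ^ 'n) set" where
  "zcl S = \<Inter>{Z. zariski_closed Z \<and> S \<subseteq> Z}"

definition irreducible_variety :: "('k::field ^ 'n::finite) set \<Rightarrow> bool" where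
  "irreducible_variety X \<longleftrightarrow> zariski_closed X \<and> X \<noteq> {} \<and>
     (\<forall>A B. zariski_closed A \<and> zariski_closed B \<and> X = A \<union> B \<longrightarrow> X = A \<or> X = B)"

definition nondegenerate :: "('k::field ^ 'n::finite) set \<Rightarrow> bool" where
  "nondegenerate X \<longleftrightarrow> (\<forall>a::'k^'n. (\<forall>x\<in>X. (\<Sum>i\<in>UNIV. a $ i * x $ i) = 0) \<longrightarrow> a = 0)"

definition distinct_pts :: "('k::field ^ 'n::finite) \<Rightarrow> 'k ^ 'n \<Rightarrow> bool" where
  "distinct_pts x y \<longleftrightarrow> (\<forall>c. y \<noteq> c *s x) \<and> (\<forall>c. x \<noteq> c *s y)"

definition in_span_of :: "('k::field ^ 'n::finite) set \<Rightarrow> 'k ^ 'n \<Rightarrow> nat \<Rightarrow> bool" where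
  "in_span_of X p r \<longleftrightarrow> (\<exists>(x :: nat \<Rightarrow> 'k ^ 'n) (c :: nat \<Rightarrow> 'k).
      (\<forall>i<r. x i \<in> X) \<and> (\<forall>i<r. \<forall>j<r. i \<noteq> j \<longrightarrow> distinct_pts (x i) (x j)) \<and>
      p = (\<Sum>i<r. c i *s x i))"

definition rank :: "('k::field ^ 'n::finite) set \<Rightarrow> 'k ^ 'n \<Rightarrow> nat" where
  "rank X p = (LEAST r. in_span_of X p r)"

definition W :: "('k::field ^ 'n::finite) set \<Rightarrow> nat \<Rightarrow> ('k ^ 'n) set" where
  "W X k = zcl {p \<in> proj_pts. rank X p = k}"

definition is_generic_rank :: "('k::field ^ 'n::finite) set \<Rightarrow> nat \<Rightarrow> bool" where
  "is_generic_rank X g \<longleftrightarrow> (\<exists>U. zariski_open U \<and> U \<noteq> {} \<and> zcl U = proj_pts \<and>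
      (\<forall>p\<in>U. rank X p = g))"

definition is_max_rank :: "('k::field ^ 'n::finite) set \<Rightarrow> nat \<Rightarrow> bool" where
  "is_max_rank X m \<longleftrightarrow> (\<exists>p\<in>proj_pts. rank X p = m) \<and> (\<forall>p\<in>proj_pts. rank X p \<le> m)"

definition join :: "('k::field ^ 'n::finite) set \<Rightarrow> ('k ^ 'n) set \<Rightarrow> ('k ^ 'n) set" where
  "join V1 V2 = zcl {z. z \<noteq> 0 \<and> (\<exists>p\<in>V1. \<exists>q\<in>V2. distinct_pts p q \<and>
      (\<exists>a b. z = a *s p + b *s q))}"

end

theory Submission
  imports Defs "HOL-Analysis.Cartesian_Space"
begin

definition mono_e :: "('n::finite \<Rightarrow> nat) \<Rightarrow> 'k::field ^ 'n \<Rightarrow> 'k" where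
  "mono_e e x = (\<Prod>i\<in>UNIV. (x $ i) ^ e i)"

definition hpd :: "nat \<Rightarrow> ('k::field ^ 'n::finite \<Rightarrow> 'k) \<Rightarrow> bool" where
  "hpd d f \<longleftrightarrow> (\<exists>C c. finite C \<and> (\<forall>e\<in>C. (\<Sum>i\<in>UNIV. e i) = d) \<and>
      (\<forall>x. f x = (\<Sum>e\<in>C. c e * mono_e e x)))"

lemma hom_poly_hpd: "hom_poly f \<longleftrightarrow> (\<exists>d. hpd d f)"
  unfolding hom_poly_def hpd_def mono_e_def by blast

lemma hpd_I:
  assumes "finite J" "\<forall>j\<in>J. (\<Sum>i\<in>UNIV. E j i) = d"
    "\<forall>x. f x = (\<Sum>j\<in>J. c j * mono_e (E j) x)"
  shows "hpd d f"
  unfolding hpd_def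
proof (intro exI conjI allI)
  show "finite (E ` J)" using assms(1) by simp
  show "\<forall>e\<in>E ` J. (\<Sum>i\<in>UNIV. e i) = d" using assms(2) by auto
  fix x
  have "f x = (\<Sum>e\<in>E ` J. (\<Sum>j\<in>{j\<in>J. E j = e}. c j * mono_e (E j) x))"
    using assms(3) sum.image_gen[OF assms(1), of "\<lambda>j. c j * mono_e (E j) x" E] by simp
  also have "\<dots> = (\<Sum>e\<in>E ` J. (\<Sum>j\<in>{j\<in>J. E j = e}. c j) * mono_e e x)"
    by (intro sum.cong refl) (auto simp: sum_distrib_right)
  finally show "f x = (\<Sum>e\<in>E ` J. (\<lambda>e. \<Sum>j\<in>{j\<in>J. E j = e}. c j) e * mono_e e x)" .
qed

lemma hpdE:
  assumes "hpd d f"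
  obtains C c where "finite C" "\<forall>e\<in>C. (\<Sum>i\<in>UNIV. e i) = d" "\<forall>x. f x = (\<Sum>e\<in>C. c e * mono_e e x)"
  using assms unfolding hpd_def by blast

lemma hpd_zero: "hpd d (\<lambda>x. 0)"
  unfolding hpd_def by (rule exI[of _ "{}"]) auto

lemma hpd_const: "hpd 0 (\<lambda>x. c)"
  unfolding hpd_def
  by (rule exI[of _ "{\<lambda>i. 0}"], rule exI[of _ "\<lambda>e. c"]) (auto simp: mono_e_def)

lemma hpd_coord: "hpd 1 (\<lambda>x. x $ i)"
proof -
  have "(\<Prod>j\<in>UNIV. (x $ j) ^ (if j = i then 1 else 0)) = x $ i" for x :: "'a::field ^ 'b"
  proof -
    have "(\<Prod>j\<in>UNIV. (x $ j) ^ (if j = i then 1 else 0)) = (\<Prod>j\<in>UNIV. if j = i then x $ j else 1)"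
      by (rule prod.cong) auto
    then show ?thesis by simp
  qed
  moreover have "(\<Sum>j\<in>UNIV. (if j = i then 1 else 0::nat)) = 1" by simp
  ultimately show ?thesis unfolding hpd_def mono_e_def
    by (intro exI[of _ "{\<lambda>j. if j = i then 1 else 0}"] exI[of _ "\<lambda>e. 1"]) auto
qed

lemma hpd_add:
  assumes "hpd d f" "hpd d g" shows "hpd d (\<lambda>x. f x + g x)"
proof -
  obtain C c where C: "finite C" "\<forall>e\<in>C. (\<Sum>i\<in>UNIV. e i) = d" "\<forall>x. f x = (\<Sum>e\<in>C. c e * mono_e e x)"
    using assms(1) by (rule hpdE)
  obtain D c' where D: "finite D" "\<forall>e\<in>D. (\<Sum>i\<in>UNIV. e i) = d" "\<forall>x. g x = (\<Sum>e\<in>D. c' e * mono_e e x)"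
    using assms(2) by (rule hpdE)
  show ?thesis
  proof (rule hpd_I[where J = "Inl ` C \<union> Inr ` D" and E = "case_sum id id" and c = "case_sum c c'"])
    show "finite (Inl ` C \<union> Inr ` D)" using C D by simp
    show "\<forall>j\<in>Inl ` C \<union> Inr ` D. (\<Sum>i\<in>UNIV. case_sum id id j i) = d" using C D by auto
    show "\<forall>x. f x + g x = (\<Sum>j\<in>Inl ` C \<union> Inr ` D. case_sum c c' j * mono_e (case_sum id id j) x)"
    proof
      fix x
      have "(\<Sum>j\<in>Inl ` C \<union> Inr ` D. case_sum c c' j * mono_e (case_sum id id j) x)
          = (\<Sum>j\<in>Inl ` C. case_sum c c' j * mono_e (case_sum id id j) x)
          + (\<Sum>j\<in>Inr ` D. case_sum c c' j * mono_e (case_sum id id j) x)"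
        using C D by (intro sum.union_disjoint) auto
      also have "\<dots> = f x + g x" using C D
        by (simp add: sum.reindex inj_on_def)
      finally show "f x + g x = (\<Sum>j\<in>Inl ` C \<union> Inr ` D. case_sum c c' j * mono_e (case_sum id id j) x)" by simp
    qed
  qed
qed

lemma hpd_sum: "finite A \<Longrightarrow> (\<forall>j\<in>A. hpd d (F j)) \<Longrightarrow> hpd d (\<lambda>x. \<Sum>j\<in>A. F j x)"
proof (induction A rule: finite_induct)
  case empty then show ?case by (simp add: hpd_zero)
next
  case (insert a A)
  then show ?case using hpd_add[of d "F a" "\<lambda>x. \<Sum>j\<in>A. F j x"] by simp
qed

lemma mono_e_add: "mono_e (\<lambda>i. e1 i + e2 i) x = mono_e e1 x * mono_e e2 x"
  unfolding mono_e_def by (simp add: power_add prod.distrib)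

lemma hpd_mult:
  assumes "hpd d1 f" "hpd d2 g" shows "hpd (d1 + d2) (\<lambda>x. f x * g x)"
proof -
  obtain C c where C: "finite C" "\<forall>e\<in>C. (\<Sum>i\<in>UNIV. e i) = d1" "\<forall>x. f x = (\<Sum>e\<in>C. c e * mono_e e x)"
    using assms(1) by (rule hpdE)
  obtain D c' where D: "finite D" "\<forall>e\<in>D. (\<Sum>i\<in>UNIV. e i) = d2" "\<forall>x. g x = (\<Sum>e\<in>D. c' e * mono_e e x)"
    using assms(2) by (rule hpdE)
  show ?thesis
  proof (rule hpd_I[where J = "C \<times> D" and E = "\<lambda>(e1,e2) i. e1 i + e2 i" and c = "\<lambda>(e1,e2). c e1 * c' e2"])
    show "finite (C \<times> D)" using C D by simp
    show "\<forall>j\<in>C \<times> D. (\<Sum>i\<in>UNIV. (case j of (e1, e2) \<Rightarrow> \<lambda>i. e1 i + e2 i) i) = d1 + d2"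
      using C D by (auto simp: sum.distrib)
    show "\<forall>x. f x * g x = (\<Sum>j\<in>C \<times> D. (case j of (e1, e2) \<Rightarrow> c e1 * c' e2) *
            mono_e (case j of (e1, e2) \<Rightarrow> \<lambda>i. e1 i + e2 i) x)"
    proof
      fix x
      have "f x * g x = (\<Sum>e1\<in>C. \<Sum>e2\<in>D. (c e1 * mono_e e1 x) * (c' e2 * mono_e e2 x))"
        using C D by (simp add: sum_product)
      also have "\<dots> = (\<Sum>j\<in>C \<times> D. (case j of (e1, e2) \<Rightarrow> c e1 * c' e2) *
            mono_e (case j of (e1, e2) \<Rightarrow> \<lambda>i. e1 i + e2 i) x)"
        by (simp add: sum.cartesian_product mono_e_add mult_ac split_def)
      finally show "f x * g x = (\<Sum>j\<in>C \<times> D. (case j of (e1, e2) \<Rightarrow> c e1 * c' e2) *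
            mono_e (case j of (e1, e2) \<Rightarrow> \<lambda>i. e1 i + e2 i) x)" .
    qed
  qed
qed

lemma hpd_scale:
  assumes "hpd d f" shows "f (t *s x) = t ^ d * f x"
proof -
  obtain C c where C: "finite C" "\<forall>e\<in>C. (\<Sum>i\<in>UNIV. e i) = d" "\<forall>x. f x = (\<Sum>e\<in>C. c e * mono_e e x)"
    using assms by (rule hpdE)
  have m: "mono_e e (t *s x) = t ^ (\<Sum>i\<in>UNIV. e i) * mono_e e x" for e
    unfolding mono_e_def by (simp add: power_mult_distrib prod.distrib power_sum)
  show ?thesis using C by (simp add: m sum_distrib_left mult_ac)
qed

inductive pf :: "('k::field ^ 'n::finite \<Rightarrow> 'k) \<Rightarrow> bool" where
  pf_const: "pf (\<lambda>x. c)"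
| pf_coord: "pf (\<lambda>x. x $ i)"
| pf_add: "pf a \<Longrightarrow> pf b \<Longrightarrow> pf (\<lambda>x. a x + b x)"
| pf_mult: "pf a \<Longrightarrow> pf b \<Longrightarrow> pf (\<lambda>x. a x * b x)"

lemma pf_sum: "finite A \<Longrightarrow> (\<forall>j\<in>A. pf (F j)) \<Longrightarrow> pf (\<lambda>x. \<Sum>j\<in>A. F j x)"
proof (induction A rule: finite_induct)
  case empty then show ?case using pf_const[of 0] by simp
next
  case (insert a A)
  then show ?case using pf_add[of "F a" "\<lambda>x. \<Sum>j\<in>A. F j x"] by simp
qed

lemma pf_prod: "finite A \<Longrightarrow> (\<forall>j\<in>A. pf (F j)) \<Longrightarrow> pf (\<lambda>x. \<Prod>j\<in>A. F j x)"
proof (induction A rule: finite_induct)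
  case empty then show ?case using pf_const[of 1] by simp
next
  case (insert a A)
  then show ?case using pf_mult[of "F a" "\<lambda>x. \<Prod>j\<in>A. F j x"] by simp
qed

lemma pf_power: "pf a \<Longrightarrow> pf (\<lambda>x. a x ^ n)"
proof (induction n)
  case 0 then show ?case using pf_const[of 1] by simp
next
  case (Suc n) then show ?case using pf_mult[of a "\<lambda>x. a x ^ n"] by simp
qed

lemma hpd_pf: assumes "hpd d f" shows "pf f"
proof -
  obtain C c where C: "finite C" "\<forall>x. f x = (\<Sum>e\<in>C. c e * mono_e e x)"
    using assms by (rule hpdE)
  have "pf (\<lambda>x. \<Sum>e\<in>C. c e * mono_e e x)"
    unfolding mono_e_def
    by (intro pf_sum C(1) ballI pf_mult pf_const pf_prod finite pf_power pf_coord)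
  moreover have "f = (\<lambda>x. \<Sum>e\<in>C. c e * mono_e e x)" using C by auto
  ultimately show ?thesis by simp
qed

lemma hom_poly_pf: "hom_poly f \<Longrightarrow> pf f"
  using hpd_pf hom_poly_hpd by blast

lemma pf_translate: "pf a \<Longrightarrow> pf (\<lambda>x. a (x + y))"
proof (induction rule: pf.induct)
  case (pf_const c) then show ?case by (rule pf.pf_const)
next
  case (pf_coord i) then show ?case
    using pf.pf_add[OF pf.pf_coord[of i] pf.pf_const[of "y $ i"]] by simp
next
  case (pf_add a b) then show ?case using pf.pf_add by blast
next
  case (pf_mult a b) then show ?case using pf.pf_mult by blast
qed

lemma pf_line: "pf a \<Longrightarrow> \<exists>P. \<forall>t. a (t *s x + y) = poly P t"
proof (induction rule: pf.induct)
  case (pf_const c) then show ?case by (intro exI[of _ "[:c:]"]) simp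
next
  case (pf_coord i) then show ?case by (intro exI[of _ "[:y $ i, x $ i:]"]) (simp add: algebra_simps)
next
  case (pf_add a b)
  then obtain P Q where "\<forall>t. a (t *s x + y) = poly P t" "\<forall>t. b (t *s x + y) = poly Q t" by blast
  then show ?case by (intro exI[of _ "P + Q"]) simp
next
  case (pf_mult a b)
  then obtain P Q where "\<forall>t. a (t *s x + y) = poly P t" "\<forall>t. b (t *s x + y) = poly Q t" by blast
  then show ?case by (intro exI[of _ "P * Q"]) simp
qed

lemma pf_hom: "pf a \<Longrightarrow> \<exists>h. (\<forall>d. hpd d (h d)) \<and>
   (\<forall>x. \<exists>P. (\<forall>d. coeff P d = h d x) \<and> (\<forall>t. a (t *s x) = poly P t))"
proof (induction rule: pf.induct)
  case (pf_const c)
  show ?case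
  proof (intro exI[of _ "\<lambda>d x. if d = 0 then c else 0"] conjI allI)
    fix d show "hpd d (\<lambda>x. if d = 0 then c else 0)"
      by (cases "d = 0") (simp_all add: hpd_const hpd_zero)
  next
    fix x show "\<exists>P. (\<forall>d. coeff P d = (if d = 0 then c else 0)) \<and> (\<forall>t. c = poly P t)"
      by (intro exI[of _ "[:c:]"]) (simp add: coeff_pCons split: nat.split)
  qed
next
  case (pf_coord i)
  show ?case
  proof (intro exI[of _ "\<lambda>d x. if d = 1 then x $ i else 0"] conjI allI)
    fix d show "hpd d (\<lambda>x. if d = 1 then x $ i else 0)"
      by (cases "d = 1") (use hpd_coord[of i] in \<open>simp_all add: hpd_zero\<close>)
  next
    fix x show "\<exists>P. (\<forall>d. coeff P d = (if d = 1 then x $ i else 0)) \<and> (\<forall>t. (t *s x) $ i = poly P t)"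
      by (intro exI[of _ "[:0, x $ i:]"]) (auto simp: coeff_pCons split: nat.split)
  qed
next
  case (pf_add a b)
  then obtain h1 h2 where h1: "\<forall>d. hpd d (h1 d)" "\<forall>x. \<exists>P. (\<forall>d. coeff P d = h1 d x) \<and> (\<forall>t. a (t *s x) = poly P t)"
    and h2: "\<forall>d. hpd d (h2 d)" "\<forall>x. \<exists>P. (\<forall>d. coeff P d = h2 d x) \<and> (\<forall>t. b (t *s x) = poly P t)"
    by blast
  show ?case
  proof (intro exI[of _ "\<lambda>d x. h1 d x + h2 d x"] conjI allI)
    fix d show "hpd d (\<lambda>x. h1 d x + h2 d x)" using h1 h2 by (simp add: hpd_add)
  next
    fix x
    obtain P Q where "\<forall>d. coeff P d = h1 d x" "\<forall>t. a (t *s x) = poly P t"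
      "\<forall>d. coeff Q d = h2 d x" "\<forall>t. b (t *s x) = poly Q t" using h1(2) h2(2) by meson
    then show "\<exists>P. (\<forall>d. coeff P d = h1 d x + h2 d x) \<and> (\<forall>t. a (t *s x) + b (t *s x) = poly P t)"
      by (intro exI[of _ "P + Q"]) simp
  qed
next
  case (pf_mult a b)
  then obtain h1 h2 where h1: "\<forall>d. hpd d (h1 d)" "\<forall>x. \<exists>P. (\<forall>d. coeff P d = h1 d x) \<and> (\<forall>t. a (t *s x) = poly P t)"
    and h2: "\<forall>d. hpd d (h2 d)" "\<forall>x. \<exists>P. (\<forall>d. coeff P d = h2 d x) \<and> (\<forall>t. b (t *s x) = poly P t)"
    by blast
  show ?case
  proof (intro exI[of _ "\<lambda>d x. \<Sum>i\<le>d. h1 i x * h2 (d - i) x"] conjI allI)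
    fix d show "hpd d (\<lambda>x. \<Sum>i\<le>d. h1 i x * h2 (d - i) x)"
    proof (intro hpd_sum ballI)
      fix i assume "i \<in> {..d}"
      then have "i + (d - i) = d" by simp
      then show "hpd d (\<lambda>x. h1 i x * h2 (d - i) x)"
        using h1(1) h2(1) hpd_mult[of i "h1 i" "d - i" "h2 (d - i)"] by simp
    qed simp
  next
    fix x
    obtain P Q where "\<forall>d. coeff P d = h1 d x" "\<forall>t. a (t *s x) = poly P t"
      "\<forall>d. coeff Q d = h2 d x" "\<forall>t. b (t *s x) = poly Q t" using h1(2) h2(2) by meson
    then show "\<exists>P. (\<forall>d. coeff P d = (\<Sum>i\<le>d. h1 i x * h2 (d - i) x)) \<and> (\<forall>t. a (t *s x) * b (t *s x) = poly P t)"
      by (intro exI[of _ "P * Q"]) (simp add: coeff_mult)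
  qed
qed

lemma closed_V: "(\<forall>f\<in>F. hom_poly f) \<Longrightarrow> zariski_closed {x. x \<noteq> 0 \<and> (\<forall>f\<in>F. f x = 0)}"
  unfolding zariski_closed_def by blast

lemma closedE:
  assumes "zariski_closed Z"
  obtains F where "\<forall>f\<in>F. hom_poly f" "Z = {x. x \<noteq> 0 \<and> (\<forall>f\<in>F. f x = 0)}"
  using assms unfolding zariski_closed_def by blast

lemma proj_closed: "zariski_closed (proj_pts :: ('k::field ^ 'n::finite) set)"
  unfolding proj_pts_def using closed_V[of "{}"] by simp

lemma closed_sub_proj: "zariski_closed Z \<Longrightarrow> Z \<subseteq> proj_pts"
  by (auto elim!: closedE simp: proj_pts_def)

lemma zcl_sub: "zariski_closed Z \<Longrightarrow> S \<subseteq> Z \<Longrightarrow> zcl S \<subseteq> Z"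
  unfolding zcl_def by blast

lemma zcl_sup: "S \<subseteq> zcl S"
  unfolding zcl_def by blast

lemma zcl_mono: "S \<subseteq> T \<Longrightarrow> zcl S \<subseteq> zcl T"
  unfolding zcl_def by blast

lemma zcl_closed:
  fixes S :: "('k::field ^ 'n::finite) set"
  assumes "S \<subseteq> proj_pts" shows "zariski_closed (zcl S)"
proof -
  define FF where "FF Z = (SOME F. (\<forall>f\<in>F. hom_poly f) \<and> Z = {x. x \<noteq> 0 \<and> (\<forall>f\<in>F. f x = 0)})" for Z :: "('k ^ 'n) set"
  have FF: "(\<forall>f\<in>FF Z. hom_poly f) \<and> Z = {x. x \<noteq> 0 \<and> (\<forall>f\<in>FF Z. f x = 0)}" if "zariski_closed Z" for Z
    unfolding FF_def using that unfolding zariski_closed_def by (rule someI_ex)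
  let ?C = "{Z. zariski_closed Z \<and> S \<subseteq> Z}"
  have ne: "proj_pts \<in> ?C" using assms proj_closed by blast
  have "zcl S = {x. x \<noteq> 0 \<and> (\<forall>f\<in>(\<Union>Z\<in>?C. FF Z). f x = 0)}"
  proof (intro set_eqI iffI)
    fix x assume x: "x \<in> zcl S"
    have "x \<in> proj_pts" using x ne unfolding zcl_def by blast
    moreover have "\<forall>f\<in>(\<Union>Z\<in>?C. FF Z). f x = 0"
    proof
      fix f assume "f \<in> (\<Union>Z\<in>?C. FF Z)"
      then obtain Z where Z: "Z \<in> ?C" "f \<in> FF Z" by blast
      then have "x \<in> Z" using x unfolding zcl_def by blast
      then show "f x = 0" using FF[of Z] Z by blast
    qed
    ultimately show "x \<in> {x. x \<noteq> 0 \<and> (\<forall>f\<in>(\<Union>Z\<in>?C. FF Z). f x = 0)}" by (simp add: proj_pts_def)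
  next
    fix x assume x: "x \<in> {x. x \<noteq> 0 \<and> (\<forall>f\<in>(\<Union>Z\<in>?C. FF Z). f x = 0)}"
    show "x \<in> zcl S" unfolding zcl_def
    proof
      fix Z assume Z: "Z \<in> ?C"
      have "\<forall>f\<in>FF Z. f x = 0"
      proof
        fix f assume "f \<in> FF Z"
        then have "f \<in> (\<Union>Z\<in>?C. FF Z)" using Z by blast
        then show "f x = 0" using x by blast
      qed
      then have "x \<in> {x. x \<noteq> 0 \<and> (\<forall>f\<in>FF Z. f x = 0)}" using x by simp
      then show "x \<in> Z" using FF[of Z] Z by (metis (no_types, lifting) mem_Collect_eq)
    qed
  qed
  moreover have "\<forall>f\<in>(\<Union>Z\<in>?C. FF Z). hom_poly f" using FF by blast
  ultimately show ?thesis using closed_V[of "\<Union>Z\<in>?C. FF Z"] by simp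
qed

lemma closed_cone:
  assumes "zariski_closed Z" "x \<in> Z" "t \<noteq> 0" shows "t *s x \<in> Z"
proof -
  obtain F where F: "\<forall>f\<in>F. hom_poly f" "Z = {x. x \<noteq> 0 \<and> (\<forall>f\<in>F. f x = 0)}"
    using assms(1) by (rule closedE)
  have "x \<noteq> 0" using assms(2) F(2) by simp
  have "t *s x \<noteq> 0"
  proof
    assume "t *s x = 0"
    then have "\<forall>i. t * x $ i = 0" by (simp add: vec_eq_iff)
    then have "x = 0" using assms(3) by (simp add: vec_eq_iff)
    then show False using \<open>x \<noteq> 0\<close> by simp
  qed
  moreover have "f (t *s x) = 0" if fF: "f \<in> F" for f
  proof -
    obtain d where d: "hpd d f" using F(1) fF hom_poly_hpd by metis
    have "f x = 0" using assms(2) F(2) fF by simp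
    then show ?thesis using hpd_scale[OF d, of t x] by simp
  qed
  ultimately show ?thesis using F(2) by simp
qed

lemma poly_zero_nz:
  fixes P :: "'k::field_char_0 poly"
  assumes "\<forall>t. t \<noteq> 0 \<longrightarrow> poly P t = 0" shows "P = 0"
proof (rule ccontr)
  assume "P \<noteq> 0"
  then have "finite {t. poly P t = 0}" by (rule poly_roots_finite)
  moreover have "UNIV - {0} \<subseteq> {t. poly P t = 0}" using assms by auto
  ultimately have "finite (UNIV - {0::'k})" by (rule finite_subset[rotated])
  then have "finite (UNIV :: 'k set)" by simp
  then show False using infinite_UNIV_char_0[where 'a='k] by simp
qed

lemma poly_zero_coeffs: "(\<forall>d. coeff P d = 0) \<Longrightarrow> P = 0"
  by (simp add: poly_eqI)

lemma cone_closure: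
  fixes S :: "('k::field_char_0 ^ 'n::finite) set"
  assumes "pf \<phi>" "S \<subseteq> proj_pts" "\<forall>v\<in>S. \<forall>t. t \<noteq> 0 \<longrightarrow> \<phi> (t *s v) = 0" "p \<in> zcl S"
  shows "\<phi> p = 0"
proof -
  obtain h where h: "\<forall>d. hpd d (h d)" "\<forall>x. \<exists>P. (\<forall>d. coeff P d = h d x) \<and> (\<forall>t. \<phi> (t *s x) = poly P t)"
    using pf_hom[OF assms(1)] by blast
  let ?Z = "{x. x \<noteq> 0 \<and> (\<forall>f\<in>range h. f x = 0)}"
  have cl: "zariski_closed ?Z" using h(1) hom_poly_hpd by (intro closed_V) blast
  have "S \<subseteq> ?Z"
  proof
    fix v assume v: "v \<in> S"
    obtain P where P: "\<forall>d. coeff P d = h d v" "\<forall>t. \<phi> (t *s v) = poly P t" using h(2) by blast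
    have "P = 0" using P(2) assms(3) v by (intro poly_zero_nz) auto
    then show "v \<in> ?Z" using P(1) v assms(2) by (auto simp: proj_pts_def)
  qed
  then have "p \<in> ?Z" using zcl_sub[OF cl] assms(4) by blast
  obtain P where P: "\<forall>d. coeff P d = h d p" "\<forall>t. \<phi> (t *s p) = poly P t" using h(2) by blast
  have "P = 0" using P(1) \<open>p \<in> ?Z\<close> by (intro poly_zero_coeffs) auto
  then show ?thesis using P(2)[rule_format, of 1] by simp
qed

lemma smult_0 [simp]: "(0::'a::field) *s x = 0" by (simp add: vec_eq_iff)
lemma smult_1 [simp]: "(1::'a::field) *s x = x" by (simp add: vec_eq_iff)

definition irr :: "('k::field ^ 'n::finite) set \<Rightarrow> bool" where
  "irr S \<longleftrightarrow> (\<forall>a b. pf a \<longrightarrow> pf b \<longrightarrow> (\<forall>s\<in>S. a s * b s = 0) \<longrightarrow> (\<forall>s\<in>S. a s = 0) \<or> (\<forall>s\<in>S. b s = 0))"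

lemma irr_single: "irr {p}"
  unfolding irr_def by simp

lemma irr_sum:
  assumes S: "irr S" and T: "irr T"
  shows "irr {s + t | s t. s \<in> S \<and> t \<in> T}"
  unfolding irr_def
proof (intro allI impI)
  fix a b :: "'a ^ 'b \<Rightarrow> 'a"
  assume pa: "pf a" and pb: "pf b" and ab: "\<forall>z\<in>{s + t | s t. s \<in> S \<and> t \<in> T}. a z * b z = 0"
  show "(\<forall>z\<in>{s + t | s t. s \<in> S \<and> t \<in> T}. a z = 0) \<or> (\<forall>z\<in>{s + t | s t. s \<in> S \<and> t \<in> T}. b z = 0)"
  proof (rule ccontr)
    assume "\<not> ?thesis"
    then obtain s1 t1 s2 t2 where st: "s1 \<in> S" "t1 \<in> T" "a (s1 + t1) \<noteq> 0" "s2 \<in> S" "t2 \<in> T" "b (s2 + t2) \<noteq> 0"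
      by blast
    have slice: "(\<forall>t\<in>T. a (s + t) = 0) \<or> (\<forall>t\<in>T. b (s + t) = 0)" if s: "s \<in> S" for s
    proof -
      have p1: "pf (\<lambda>t. a (s + t))" using pf_translate[OF pa, of s] by (simp add: add.commute)
      have p2: "pf (\<lambda>t. b (s + t))" using pf_translate[OF pb, of s] by (simp add: add.commute)
      have "\<forall>t\<in>T. a (s + t) * b (s + t) = 0" using ab s by blast
      then show ?thesis using T p1 p2 unfolding irr_def by blast
    qed
    have q1: "pf (\<lambda>s. a (s + t1))" by (rule pf_translate[OF pa])
    have q2: "pf (\<lambda>s. b (s + t2))" by (rule pf_translate[OF pb])
    have "\<not> (\<forall>s\<in>S. a (s + t1) * b (s + t2) = 0)"
    proof
      assume "\<forall>s\<in>S. a (s + t1) * b (s + t2) = 0"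
      then have "(\<forall>s\<in>S. a (s + t1) = 0) \<or> (\<forall>s\<in>S. b (s + t2) = 0)"
        using S q1 q2 unfolding irr_def by blast
      then show False using st by blast
    qed
    then obtain s where s: "s \<in> S" "a (s + t1) \<noteq> 0" "b (s + t2) \<noteq> 0" by auto
    show False using slice[OF s(1)] s st by blast
  qed
qed

lemma irr_cone:
  fixes X :: "('k::field_char_0 ^ 'n::finite) set"
  assumes X: "irreducible_variety X"
  shows "irr (insert 0 X)"
  unfolding irr_def
proof (intro allI impI)
  fix a b :: "'k ^ 'n \<Rightarrow> 'k"
  assume pa: "pf a" and pb: "pf b" and ab: "\<forall>s\<in>insert 0 X. a s * b s = 0"
  have cX: "zariski_closed X" and neX: "X \<noteq> {}"
    and irrX: "\<And>A B. zariski_closed A \<Longrightarrow> zariski_closed B \<Longrightarrow> X = A \<union> B \<Longrightarrow> X = A \<or> X = B"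
    using X unfolding irreducible_variety_def by blast+
  obtain F where F: "\<forall>f\<in>F. hom_poly f" "X = {x. x \<noteq> 0 \<and> (\<forall>f\<in>F. f x = 0)}"
    using cX by (rule closedE)
  obtain ha where ha: "\<forall>d. hpd d (ha d)" "\<forall>x. \<exists>P. (\<forall>d. coeff P d = ha d x) \<and> (\<forall>t. a (t *s x) = poly P t)"
    using pf_hom[OF pa] by blast
  obtain hb where hb: "\<forall>d. hpd d (hb d)" "\<forall>x. \<exists>P. (\<forall>d. coeff P d = hb d x) \<and> (\<forall>t. b (t *s x) = poly P t)"
    using pf_hom[OF pb] by blast
  have inX: "t *s x \<in> insert 0 X" if "x \<in> X" for t x
    using closed_cone[OF cX that, of t] by (cases "t = 0") auto
  have split: "(\<forall>d. ha d x = 0) \<or> (\<forall>d. hb d x = 0)" if x: "x \<in> X" for x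
  proof -
    obtain P where P: "\<forall>d. coeff P d = ha d x" "\<forall>t. a (t *s x) = poly P t" using ha(2) by blast
    obtain Q where Q: "\<forall>d. coeff Q d = hb d x" "\<forall>t. b (t *s x) = poly Q t" using hb(2) by blast
    have "\<forall>t. poly (P * Q) t = 0"
    proof
      fix t
      have "a (t *s x) * b (t *s x) = 0" using ab inX[OF x, of t] by blast
      then show "poly (P * Q) t = 0" using P(2) Q(2) by simp
    qed
    then have "P * Q = 0" using poly_all_0_iff_0 by blast
    then have "P = 0 \<or> Q = 0" by simp
    then show ?thesis using P(1) Q(1) by auto
  qed
  define Za where "Za = {x. x \<noteq> 0 \<and> (\<forall>f\<in>F \<union> range ha. f x = 0)}"
  define Zb where "Zb = {x. x \<noteq> 0 \<and> (\<forall>f\<in>F \<union> range hb. f x = 0)}"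
  have cZa: "zariski_closed Za" unfolding Za_def
    using F(1) ha(1) hom_poly_hpd by (intro closed_V) blast
  have cZb: "zariski_closed Zb" unfolding Zb_def
    using F(1) hb(1) hom_poly_hpd by (intro closed_V) blast
  have "X = Za \<union> Zb"
  proof
    show "X \<subseteq> Za \<union> Zb"
    proof
      fix x assume x: "x \<in> X"
      have "x \<noteq> 0" "\<forall>f\<in>F. f x = 0" using x F(2) by auto
      then show "x \<in> Za \<union> Zb" using split[OF x] unfolding Za_def Zb_def by auto
    qed
    show "Za \<union> Zb \<subseteq> X" unfolding Za_def Zb_def using F(2) by auto
  qed
  then have disj: "X = Za \<or> X = Zb" using irrX cZa cZb by blast
  have van: "\<forall>s\<in>insert 0 X. c s = 0"
    if hc: "\<forall>x. \<exists>P. (\<forall>d. coeff P d = h d x) \<and> (\<forall>t. c (t *s x) = poly P t)"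
      and hz: "\<forall>x\<in>X. \<forall>d. h d x = 0" for c :: "'k ^ 'n \<Rightarrow> 'k" and h
  proof -
    have all: "c (t *s x) = 0" if x: "x \<in> X" for x t
    proof -
      obtain P where P: "\<forall>d. coeff P d = h d x" "\<forall>t. c (t *s x) = poly P t" using hc by blast
      have "P = 0" using P(1) hz x by (intro poly_zero_coeffs) auto
      then show ?thesis using P(2) by simp
    qed
    obtain x0 where "x0 \<in> X" using neX by blast
    show ?thesis
    proof
      fix s assume "s \<in> insert 0 X"
      then show "c s = 0"
        using all[of s 1] all[OF \<open>x0 \<in> X\<close>, of 0] by auto
    qed
  qed
  from disj show "(\<forall>s\<in>insert 0 X. a s = 0) \<or> (\<forall>s\<in>insert 0 X. b s = 0)"
  proof
    assume "X = Za"
    then have "\<forall>x\<in>X. \<forall>d. ha d x = 0" unfolding Za_def by auto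
    then show ?thesis using van[OF ha(2)] by blast
  next
    assume "X = Zb"
    then have "\<forall>x\<in>X. \<forall>d. hb d x = 0" unfolding Zb_def by auto
    then show ?thesis using van[OF hb(2)] by blast
  qed
qed

lemma distinct_pts_sym: "distinct_pts a b \<Longrightarrow> distinct_pts b a"
  unfolding distinct_pts_def by blast

lemma in_span_scale: "in_span_of X w r \<Longrightarrow> in_span_of X (c *s w) r"
proof -
  assume "in_span_of X w r"
  then obtain x cc where x: "\<forall>i<r. x i \<in> X" "\<forall>i<r. \<forall>j<r. i \<noteq> j \<longrightarrow> distinct_pts (x i) (x j)"
    "w = (\<Sum>i<r. cc i *s x i)" unfolding in_span_of_def by blast
  have "c *s w = (\<Sum>i<r. (c * cc i) *s x i)"
    unfolding x(3) vec.scale_sum_right vector_smult_assoc by (rule refl)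
  then show ?thesis using x(1,2) unfolding in_span_of_def
    by (intro exI[of _ x] exI[of _ "\<lambda>i. c * cc i"]) simp
qed

lemma in_span_0: "in_span_of X 0 0"
  unfolding in_span_of_def by simp

lemma in_span_zero: "in_span_of X v 0 \<Longrightarrow> v = 0"
  unfolding in_span_of_def by simp

lemma closed_nz: "zariski_closed X \<Longrightarrow> y \<in> X \<Longrightarrow> y \<noteq> 0"
  using closed_sub_proj unfolding proj_pts_def by blast

lemma in_span_add:
  assumes cX: "zariski_closed X" and w: "in_span_of X w r" and y: "y \<in> X"
  shows "\<exists>r'. r' \<le> Suc r \<and> in_span_of X (w + y) r'"
proof -
  obtain x c where x: "\<forall>i<r. x i \<in> X" "\<forall>i<r. \<forall>j<r. i \<noteq> j \<longrightarrow> distinct_pts (x i) (x j)"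
    "w = (\<Sum>i<r. c i *s x i)" using w unfolding in_span_of_def by blast
  show ?thesis
  proof (cases "\<exists>j<r. \<not> distinct_pts y (x j)")
    case True
    then obtain j where j: "j < r" "\<not> distinct_pts y (x j)" by blast
    have "\<exists>e. y = e *s x j"
    proof -
      from j(2) have "(\<exists>e. x j = e *s y) \<or> (\<exists>e. y = e *s x j)" unfolding distinct_pts_def by blast
      then show ?thesis
      proof
        assume "\<exists>e. x j = e *s y"
        then obtain e where e: "x j = e *s y" by blast
        have "x j \<noteq> 0" using closed_nz[OF cX] x(1) j(1) by blast
        then have "e \<noteq> 0" using e by auto
        then have "inverse e *s x j = y" using e by (simp add: vector_smult_assoc)
        then show ?thesis by metis
      qed
    qed
    then obtain e where e: "y = e *s x j" by blast
    have "(\<Sum>i<r. (c i + (if i = j then e else 0)) *s x i) = w + (\<Sum>i<r. (if i = j then e *s x i else 0))"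
      unfolding x(3) by (simp add: vector_sadd_rdistrib sum.distrib if_distrib[of "\<lambda>a. a *s _"] cong: if_cong)
    also have "\<dots> = w + y" using j(1) e by simp
    finally have "in_span_of X (w + y) r" using x(1,2) unfolding in_span_of_def
      by (intro exI[of _ x] exI[of _ "\<lambda>i. c i + (if i = j then e else 0)"]) simp
    then show ?thesis by (intro exI[of _ r]) simp
  next
    case False
    define x' where "x' = x(r := y)"
    define c' where "c' = c(r := 1)"
    have "\<forall>i<Suc r. x' i \<in> X" using x(1) y by (auto simp: x'_def less_Suc_eq)
    moreover have "\<forall>i<Suc r. \<forall>j<Suc r. i \<noteq> j \<longrightarrow> distinct_pts (x' i) (x' j)"
    proof -
      have sym: "\<forall>j<r. distinct_pts (x j) y" using False distinct_pts_sym by blast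
      show ?thesis using x(2) False sym by (auto simp: x'_def less_Suc_eq)
    qed
    moreover have "(\<Sum>i<Suc r. c' i *s x' i) = w + y"
    proof -
      have "(\<Sum>i<r. c' i *s x' i) = (\<Sum>i<r. c i *s x i)"
        by (rule sum.cong) (auto simp: c'_def x'_def)
      then show ?thesis unfolding x(3) by (simp add: c'_def x'_def)
    qed
    ultimately have "in_span_of X (w + y) (Suc r)" unfolding in_span_of_def
      by (intro exI[of _ x'] exI[of _ c']) simp
    then show ?thesis by (intro exI[of _ "Suc r"]) simp
  qed
qed

lemma span_univ:
  fixes X :: "('k::field ^ 'n::finite) set"
  assumes nd: "nondegenerate X"
  shows "vec.span X = UNIV"
proof (rule ccontr)
  assume "vec.span X \<noteq> UNIV"
  then obtain v where v: "v \<notin> vec.span X" by blast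
  obtain B where B: "B \<subseteq> X" "vec.independent B" "X \<subseteq> vec.span B"
    by (rule vec.maximal_independent_subset)
  have "v \<notin> vec.span B" using v B(1) vec.span_mono by blast
  then have ind: "vec.independent (insert v B)" using B(2) by (rule vec.independent_insertI)
  define i0 :: 'n where "i0 = undefined"
  obtain g :: "'k ^ 'n \<Rightarrow> 'k ^ 'n" where g: "Vector_Spaces.linear (*s) (*s) g"
    "\<forall>x\<in>insert v B. g x = (if x = v then axis i0 1 else 0)"
    using vec.linear_independent_extend[OF ind, of "\<lambda>x. if x = v then axis i0 1 else (0 :: 'k ^ 'n)"] by blast
  define M where "M = matrix g"
  have gm: "g x = M *v x" for x using matrix_works[OF g(1)] unfolding M_def by simp
  have gB: "g x = 0" if "x \<in> B" for x
    using g(2) that \<open>v \<notin> vec.span B\<close> vec.span_base by force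
  have g0: "g x = 0" if "x \<in> vec.span B" for x
    using that
  proof (induction rule: vec.span_induct_alt)
    case base then show ?case unfolding gm by (rule vec.zero)
  next
    case (step c x y)
    have "g (c *s x + y) = c *s g x + g y" unfolding gm by (simp add: vec.add vec.scale)
    then show ?case using step gB by simp
  qed
  define a :: "'k ^ 'n" where "a = (\<chi> j. g (axis j 1) $ i0)"
  have ga: "g x $ i0 = (\<Sum>i\<in>UNIV. a $ i * x $ i)" for x
    using linear_componentwise[OF g(1), of x i0] by (simp add: a_def mult.commute)
  have "\<forall>x\<in>X. (\<Sum>i\<in>UNIV. a $ i * x $ i) = 0"
  proof
    fix x assume "x \<in> X"
    then have "g x = 0" using g0 B(3) by blast
    then show "(\<Sum>i\<in>UNIV. a $ i * x $ i) = 0" using ga[of x] by simp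
  qed
  then have "a = 0" using nd unfolding nondegenerate_def by blast
  then have "g v $ i0 = 0" using ga[of v] by simp
  moreover have "g v $ i0 = 1" using g(2) by (simp add: axis_def)
  ultimately show False by simp
qed

lemma ex_span:
  fixes X :: "('k::field ^ 'n::finite) set"
  assumes cX: "zariski_closed X" and nd: "nondegenerate X"
  shows "\<exists>r. in_span_of X v r"
proof -
  have "v \<in> vec.span X" using span_univ[OF nd] by simp
  then show ?thesis
  proof (induction rule: vec.span_induct_alt)
    case base then show ?case using in_span_0 by blast
  next
    case (step c x y)
    then obtain r where r: "in_span_of X y r" by blast
    show ?case
    proof (cases "c = 0")
      case True then show ?thesis using r by auto
    next
      case False
      then have "c *s x \<in> X" using closed_cone[OF cX step(1)] by blast
      then obtain r' where "in_span_of X (y + c *s x) r'" using in_span_add[OF cX r] by blast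
      then show ?thesis by (auto simp: add.commute)
    qed
  qed
qed

primrec Ss :: "('k::field ^ 'n::finite) set \<Rightarrow> 'k ^ 'n \<Rightarrow> nat \<Rightarrow> ('k ^ 'n) set" where
  "Ss X p 0 = {p}"
| "Ss X p (Suc i) = {s + t | s t. s \<in> Ss X p i \<and> t \<in> insert 0 X}"

lemma irr_Ss:
  fixes X :: "('k::field_char_0 ^ 'n::finite) set"
  assumes "irreducible_variety X" shows "irr (Ss X p i)"
proof (induction i)
  case 0 then show ?case by (simp add: irr_single)
next
  case (Suc i) then show ?case by (simp only: Ss.simps) (rule irr_sum[OF Suc.IH irr_cone[OF assms]])
qed

lemma Ss_add: "s \<in> Ss X p i \<Longrightarrow> (\<forall>l<j. y l \<in> insert 0 X) \<Longrightarrow> s + (\<Sum>l<j. y l) \<in> Ss X p (i + j)"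
proof (induction j)
  case 0 then show ?case by simp
next
  case (Suc j)
  then have "s + (\<Sum>l<j. y l) \<in> Ss X p (i + j)" by simp
  moreover have "y j \<in> insert 0 X" using Suc.prems by simp
  ultimately have "(s + (\<Sum>l<j. y l)) + y j \<in> Ss X p (Suc (i + j))" by auto
  then show ?case by (simp add: add.assoc)
qed

lemma p_in_Ss: "p \<in> Ss X p i"
  using Ss_add[of p X p 0 i "\<lambda>_. 0"] by simp

lemma cone_ins: "zariski_closed X \<Longrightarrow> x \<in> X \<Longrightarrow> c *s x \<in> insert 0 X"
  using closed_cone[of X x c] by (cases "c = 0") auto

context
  fixes X :: "('k::field_char_0 ^ 'n::finite) set"
  assumes cX: "zariski_closed X" and nd: "nondegenerate X"
begin

lemma rank_spec: "in_span_of X v (Defs.rank X v)"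
  unfolding Defs.rank_def using ex_span[OF cX nd, of v] by (rule LeastI_ex)

lemma rank_le: "in_span_of X v r \<Longrightarrow> Defs.rank X v \<le> r"
  unfolding Defs.rank_def by (rule Least_le)

lemma rank_zero: "Defs.rank X 0 = 0"
  using rank_le[OF in_span_0] by simp

lemma rank_eq0: "Defs.rank X v = 0 \<Longrightarrow> v = 0"
  using rank_spec[of v] in_span_zero by metis

lemma rank_scale: "Defs.rank X (c *s w) \<le> Defs.rank X w"
  by (rule rank_le[OF in_span_scale[OF rank_spec]])

lemma rank_scale_eq: "t \<noteq> 0 \<Longrightarrow> Defs.rank X (t *s w) = Defs.rank X w"
proof -
  assume t: "t \<noteq> 0"
  have "w = inverse t *s (t *s w)" using t by (simp add: vector_smult_assoc)
  then have "Defs.rank X w \<le> Defs.rank X (t *s w)" using rank_scale[of "inverse t" "t *s w"] by simp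
  then show ?thesis using rank_scale[of t w] by simp
qed

lemma rank_comb:
  assumes y: "y \<in> X" shows "Defs.rank X (c *s w + d *s y) \<le> Suc (Defs.rank X w)"
proof (cases "d = 0")
  case True then show ?thesis using rank_scale[of c w] by simp
next
  case False
  then have "d *s y \<in> X" using closed_cone[OF cX y] by blast
  then obtain r' where "r' \<le> Suc (Defs.rank X w)" "in_span_of X (c *s w + d *s y) r'"
    using in_span_add[OF cX in_span_scale[OF rank_spec[of w], where c=c]] by blast
  then show ?thesis using rank_le by fastforce
qed

lemma rank_step:
  assumes y: "y \<in> insert 0 X" shows "Defs.rank X s0 \<le> Suc (Defs.rank X (s0 + y))"
proof (cases "y = 0")
  case True then show ?thesis by simp
next
  case False
  then have "y \<in> X" using y by simp
  have "s0 = 1 *s (s0 + y) + (-1) *s y" by (simp add: vec_eq_iff)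
  moreover have "Defs.rank X (1 *s (s0 + y) + (-1) *s y) \<le> Suc (Defs.rank X (s0 + y))"
    by (rule rank_comb[OF \<open>y \<in> X\<close>])
  ultimately show ?thesis by simp
qed

lemma dense_rank:
  assumes irrX: "irreducible_variety X" and pf: "pf f" and fp: "f p \<noteq> 0"
    and van: "\<forall>s. s \<noteq> 0 \<and> Defs.rank X s = k - 1 \<longrightarrow> f s = 0"
    and rk: "k \<le> Defs.rank X p" and k2: "2 \<le> k"
  shows "pf Q \<Longrightarrow> (\<exists>s\<in>Ss X p i. Q s \<noteq> 0) \<Longrightarrow> \<exists>s\<in>Ss X p i. Q s \<noteq> 0 \<and> k \<le> Defs.rank X s"
proof (induction i arbitrary: Q)
  case 0 then show ?case using rk by simp
next
  case (Suc i)
  have I: "irr (Ss X p (Suc i))" by (rule irr_Ss[OF irrX])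
  have "\<not> (\<forall>s\<in>Ss X p (Suc i). Q s * f s = 0)"
  proof
    assume "\<forall>s\<in>Ss X p (Suc i). Q s * f s = 0"
    then have "(\<forall>s\<in>Ss X p (Suc i). Q s = 0) \<or> (\<forall>s\<in>Ss X p (Suc i). f s = 0)"
      using I Suc.prems(1) pf unfolding irr_def by blast
    then show False using Suc.prems(2) fp p_in_Ss[of p X "Suc i"] by blast
  qed
  then obtain s2 where s2: "s2 \<in> Ss X p (Suc i)" "Q s2 * f s2 \<noteq> 0" by blast
  then obtain s y where sy: "s \<in> Ss X p i" "y \<in> insert 0 X" "s2 = s + y" by auto
  have pphi: "pf (\<lambda>z. Q (z + y) * f (z + y))"
    by (intro pf_mult pf_translate Suc.prems(1) pf)
  have "\<exists>s\<in>Ss X p i. Q (s + y) * f (s + y) \<noteq> 0" using sy s2 by blast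
  from Suc.IH[OF pphi this] obtain s0 where s0: "s0 \<in> Ss X p i" "Q (s0 + y) * f (s0 + y) \<noteq> 0" "k \<le> Defs.rank X s0"
    by blast
  define s' where "s' = s0 + y"
  have s'S: "s' \<in> Ss X p (Suc i)" using s0(1) sy(2) unfolding s'_def by auto
  have "Defs.rank X s0 \<le> Suc (Defs.rank X s')" unfolding s'_def by (rule rank_step[OF sy(2)])
  then have r1: "k - 1 \<le> Defs.rank X s'" using s0(3) by simp
  have "Defs.rank X s' \<noteq> k - 1"
  proof
    assume r: "Defs.rank X s' = k - 1"
    then have "s' \<noteq> 0" using rank_zero k2 by auto
    then have "f s' = 0" using van r by blast
    then show False using s0(2) unfolding s'_def by simp
  qed
  then have "k \<le> Defs.rank X s'" using r1 by simp
  moreover have "Q s' \<noteq> 0" using s0(2) unfolding s'_def by simp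
  ultimately show ?case using s'S by blast
qed

end

lemma pf_affine: "pf a \<Longrightarrow> pf (\<lambda>x. a (c *s x + y))"
proof (induction rule: pf.induct)
  case (pf_const d) then show ?case by (rule pf.pf_const)
next
  case (pf_coord i) then show ?case
    using pf.pf_add[OF pf.pf_mult[OF pf.pf_const[of c] pf.pf_coord[of i]] pf.pf_const[of "y $ i"]] by simp
next
  case (pf_add a b) then show ?case using pf.pf_add by blast
next
  case (pf_mult a b) then show ?case using pf.pf_mult by blast
qed

lemma key:
  fixes X :: "('k::field_char_0 ^ 'n::finite) set"
  assumes irrX: "irreducible_variety X" and nd: "nondegenerate X" and gen: "is_generic_rank X g"
    and k: "g + 1 \<le> k" and p: "p \<in> proj_pts" and rp: "Defs.rank X p = k"
  shows "p \<in> W X (k - 1)"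
proof -
  have cX: "zariski_closed X" using irrX unfolding irreducible_variety_def by blast
  obtain U where U: "zariski_open U" "U \<noteq> {}" "\<forall>u\<in>U. Defs.rank X u = g"
    using gen unfolding is_generic_rank_def by blast
  have Usub: "U \<subseteq> proj_pts" and cU: "zariski_closed (proj_pts - U)"
    using U(1) unfolding zariski_open_def by blast+
  obtain FU where FU: "\<forall>f\<in>FU. hom_poly f" "proj_pts - U = {x. x \<noteq> 0 \<and> (\<forall>f\<in>FU. f x = 0)}"
    using cU by (rule closedE)
  obtain u where u: "u \<in> U" using U(2) by blast
  have u0: "u \<noteq> 0" using u Usub unfolding proj_pts_def by blast
  have "u \<notin> proj_pts - U" using u by blast
  then obtain h where h: "h \<in> FU" "h u \<noteq> 0" using FU(2) u0 by blast
  have "g \<noteq> 0" using rank_eq0[OF cX nd] U(3) u u0 by metis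
  then have k2: "2 \<le> k" using k by simp
  obtain xs cs where pdec: "\<forall>l<k. xs l \<in> X" "p = (\<Sum>l<k. cs l *s xs l)"
    using rank_spec[OF cX nd, of p] rp unfolding in_span_of_def by blast
  have "Defs.rank X u = g" using U(3) u by blast
  then obtain xu cu where udec: "\<forall>l<g. xu l \<in> X" "u = (\<Sum>l<g. cu l *s xu l)"
    using rank_spec[OF cX nd, of u] unfolding in_span_of_def by auto
  have ins: "\<forall>l<k. (- cs l) *s xs l \<in> insert 0 X"
  proof (intro allI impI)
    fix l assume "l < k"
    then show "(- cs l) *s xs l \<in> insert 0 X" using cone_ins[OF cX, of "xs l" "- cs l"] pdec(1) by blast
  qed
  have "p + (\<Sum>l<k. (- cs l) *s xs l) \<in> Ss X p (0 + k)"
    by (rule Ss_add[OF p_in_Ss ins])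
  moreover have "(\<Sum>l<k. (- cs l) *s xs l) = - p"
    using pdec(2) by (simp add: vec_eq_iff sum_negf)
  ultimately have "0 \<in> Ss X p k" by simp
  then have "0 + (\<Sum>l<g. cu l *s xu l) \<in> Ss X p (k + g)"
  proof (rule Ss_add)
    show "\<forall>l<g. cu l *s xu l \<in> insert 0 X"
    proof (intro allI impI)
      fix l assume "l < g"
      then show "cu l *s xu l \<in> insert 0 X" using cone_ins[OF cX, of "xu l" "cu l"] udec(1) by blast
    qed
  qed
  then have uS: "u \<in> Ss X p (k + g)" using udec(2) by simp
  show ?thesis unfolding W_def zcl_def
  proof (rule InterI)
    fix Z assume "Z \<in> {Z. zariski_closed Z \<and> {q \<in> proj_pts. Defs.rank X q = k - 1} \<subseteq> Z}"
    then have cZ: "zariski_closed Z" and RZ: "{q \<in> proj_pts. Defs.rank X q = k - 1} \<subseteq> Z" by blast+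
    obtain F where F: "\<forall>f\<in>F. hom_poly f" "Z = {x. x \<noteq> 0 \<and> (\<forall>f\<in>F. f x = 0)}"
      using cZ by (rule closedE)
    have p0: "p \<noteq> 0" using p unfolding proj_pts_def by blast
    have "\<forall>f\<in>F. f p = 0"
    proof (rule ccontr)
      assume "\<not> (\<forall>f\<in>F. f p = 0)"
      then obtain f where f: "f \<in> F" "f p \<noteq> 0" by blast
      have pff: "pf f" using F(1) f(1) hom_poly_pf by blast
      have van: "\<forall>s. s \<noteq> 0 \<and> Defs.rank X s = k - 1 \<longrightarrow> f s = 0"
      proof (intro allI impI)
        fix s assume "s \<noteq> 0 \<and> Defs.rank X s = k - 1"
        then have "s \<in> Z" using RZ unfolding proj_pts_def by auto
        then show "f s = 0" using F(2) f(1) by blast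
      qed
      have ph: "pf h" using FU(1) h(1) hom_poly_pf by blast
      have "\<exists>s\<in>Ss X p (k + g). h s \<noteq> 0" using uS h(2) by blast
      then obtain s where s: "s \<in> Ss X p (k + g)" "h s \<noteq> 0" "k \<le> Defs.rank X s"
        using dense_rank[OF cX nd irrX pff f(2) van _ k2 ph] rp by auto
      have "s \<noteq> 0" using s(3) rank_zero[OF cX nd] k2 by auto
      have "s \<in> U"
      proof (rule ccontr)
        assume "s \<notin> U"
        then have "s \<in> proj_pts - U" using \<open>s \<noteq> 0\<close> unfolding proj_pts_def by blast
        then show False using FU(2) h s(2) by blast
      qed
      then show False using U(3) s(3) k by simp
    qed
    then show "p \<in> Z" using F(2) p0 by blast
  qed
qed

lemma W_closed: "zariski_closed (W X k)"
  unfolding W_def by (rule zcl_closed) blast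

theorem theorem3p1:
  fixes X :: "('k::field_char_0 ^ 'n::finite) set" and g m :: nat
  assumes "alg_closed TYPE('k)"
    and "irreducible_variety X" and "nondegenerate X"
    and "is_generic_rank X g" and "is_max_rank X m"
  shows "(\<forall>k. g + 1 \<le> k \<and> k \<le> m \<longrightarrow> join (W X k) X \<subseteq> W X (k - 1))
     \<and> (\<forall>k. g + 1 \<le> k \<and> k \<le> m \<longrightarrow> W X k \<subseteq> W X (k - 1))
     \<and> W X g = proj_pts"
proof -
  note irrX = assms(2) and nd = assms(3) and gen = assms(4)
  have cX: "zariski_closed X" using irrX unfolding irreducible_variety_def by blast
  have g0: "g \<noteq> 0"
  proof -
    obtain U where U: "zariski_open U" "U \<noteq> {}" "\<forall>u\<in>U. Defs.rank X u = g"
      using gen unfolding is_generic_rank_def by blast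
    obtain u where u: "u \<in> U" using U(2) by blast
    have "u \<noteq> 0" using u U(1) unfolding zariski_open_def proj_pts_def by blast
    then show ?thesis using rank_eq0[OF cX nd] U(3) u by metis
  qed
  have Wstep: "W X k \<subseteq> W X (k - 1)" if k: "g + 1 \<le> k" for k
  proof -
    have "{q \<in> proj_pts. Defs.rank X q = k} \<subseteq> W X (k - 1)"
      using key[OF irrX nd gen k] by blast
    then show ?thesis unfolding W_def[of X k] by (rule zcl_sub[OF W_closed])
  qed
  have Wmono: "W X j \<subseteq> W X i" if ij: "i \<le> j" and gi: "g \<le> i" for i j
    using ij
  proof (induction j rule: dec_induct)
    case base then show ?case by simp
  next
    case (step n)
    have "W X (Suc n) \<subseteq> W X (Suc n - 1)" using Wstep[of "Suc n"] step(1) gi by simp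
    then show ?case using step(3) by simp
  qed
  have hi: "w \<in> W X i" if "w \<noteq> 0" "i \<le> Defs.rank X w" "g \<le> i" for w i
  proof -
    have "w \<in> {q \<in> proj_pts. Defs.rank X q = Defs.rank X w}" using that(1) by (simp add: proj_pts_def)
    then have "w \<in> W X (Defs.rank X w)" unfolding W_def by (rule zcl_sup[THEN subsetD])
    then show ?thesis using Wmono[OF that(2,3)] by (rule subsetD[rotated])
  qed
  have part3: "W X g = proj_pts"
  proof
    show "W X g \<subseteq> proj_pts" by (rule closed_sub_proj[OF W_closed])
    obtain U where U: "zariski_open U" "zcl U = proj_pts" "\<forall>u\<in>U. Defs.rank X u = g"
      using gen unfolding is_generic_rank_def by blast
    have "U \<subseteq> proj_pts" using U(1) unfolding zariski_open_def by simp
    then have "U \<subseteq> {q \<in> proj_pts. Defs.rank X q = g}" using U(3) by blast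
    then have "zcl U \<subseteq> W X g" unfolding W_def by (rule zcl_mono)
    then show "proj_pts \<subseteq> W X g" using U(2) by simp
  qed
  have part1: "join (W X k) X \<subseteq> W X (k - 1)" if k: "g + 1 \<le> k" for k
  proof -
    obtain FW where FW: "\<forall>f\<in>FW. hom_poly f" "W X (k - 1) = {x. x \<noteq> 0 \<and> (\<forall>f\<in>FW. f x = 0)}"
      using W_closed by (rule closedE)
    have "z \<in> W X (k - 1)" if z: "z \<noteq> 0" "p \<in> W X k" "q \<in> X" "z = a *s p + b *s q" for z p q a b
    proof -
      have "f z = 0" if fF: "f \<in> FW" for f
      proof -
        have pff: "pf f" using FW(1) fF hom_poly_pf by blast
        have fvan: "f w = 0" if "w \<noteq> 0" "k - 1 \<le> Defs.rank X w" for w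
        proof -
          have "w \<in> W X (k - 1)" using hi[OF that] k by simp
          then show ?thesis using FW(2) fF by blast
        qed
        have claimA: "f (a' *s p + b' *s q) = 0" if a': "a' \<noteq> 0" for a' b'
        proof (rule cone_closure[where S = "{q \<in> proj_pts. Defs.rank X q = k}" and \<phi> = "\<lambda>v. f (a' *s v + b' *s q)" and p = p])
          show "pf (\<lambda>v. f (a' *s v + b' *s q))" by (rule pf_affine[OF pff])
          show "{q \<in> proj_pts. Defs.rank X q = k} \<subseteq> proj_pts" by blast
          show "p \<in> zcl {q \<in> proj_pts. Defs.rank X q = k}" using z(2) unfolding W_def .
          show "\<forall>v\<in>{q \<in> proj_pts. Defs.rank X q = k}. \<forall>t. t \<noteq> 0 \<longrightarrow> f (a' *s (t *s v) + b' *s q) = 0"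
          proof (intro ballI allI impI)
            fix v and t :: 'k assume v: "v \<in> {q \<in> proj_pts. Defs.rank X q = k}" and t: "t \<noteq> 0"
            define v' where "v' = t *s v"
            have rv': "Defs.rank X v' = k" using v rank_scale_eq[OF cX nd t] unfolding v'_def by simp
            define w where "w = a' *s v' + b' *s q"
            have "v' = inverse a' *s w + (- (inverse a' * b')) *s q"
              using a' unfolding w_def by (simp add: vec_eq_iff distrib_left mult.assoc[symmetric])
            then have "Defs.rank X v' \<le> Suc (Defs.rank X w)"
              using rank_comb[OF cX nd z(3), where c = "inverse a'" and w = w and d = "- (inverse a' * b')"]
              by simp
            then have rw: "k - 1 \<le> Defs.rank X w" using rv' by simp
            have "w \<noteq> 0" using rw rank_zero[OF cX nd] k g0 by auto
            then have "f w = 0" using fvan rw by blast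
            then show "f (a' *s (t *s v) + b' *s q) = 0" unfolding w_def v'_def .
          qed
        qed
        obtain P where P: "\<forall>t. f (t *s p + b *s q) = poly P t"
          using pf_line[OF pff] by blast
        have "P = 0"
        proof (rule poly_zero_nz, intro allI impI)
          fix t :: 'k assume "t \<noteq> 0"
          then show "poly P t = 0" using P claimA[of t b] by simp
        qed
        then show ?thesis using P z(4) by simp
      qed
      then show ?thesis using FW(2) z(1) by blast
    qed
    then have "{z. z \<noteq> 0 \<and> (\<exists>p\<in>W X k. \<exists>q\<in>X. distinct_pts p q \<and> (\<exists>a b. z = a *s p + b *s q))} \<subseteq> W X (k - 1)"
      by blast
    then show ?thesis unfolding join_def by (rule zcl_sub[OF W_closed])
  qed
  show ?thesis using part1 Wstep part3 by blast
qed

end
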